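(* Any Radon measure $\mu$ of finite mass on a Noetherian Priestley space $(X,\tau,\le)$ is atomic: there is a countable set $F\subset X$ such that $\mu=\sum_{x\in F}\mu(\{x\})\delta_x$ with $\sum_{x\in F}\mu(\{x\})<\infty$.
   Context: A Priestley space is a partially ordered set $(X,\le)$ with a quasi-compact topology $\tau$ such that whenever $y\not\le x$ there is a clopen down-set $U$ (i.e. $z\in U$, $w\le z$ implies $w\in U$) with $x\in U$, $y\notin U$; it is compact Hausdorff. It is Noetherian if the topology $\tau^u$ consisting of all open up-sets is a Noetherian topology, equivalently every decreasing sequence of closed down-sets is eventually stationary. A Radon measure is a positive Borel measure that is inner regular with respect to compact sets. *)

theory Defs
  imports "HOL-Analysis.Analysis"
begin

definition borel_of :: "'a topology \<Rightarrow> 'a measure" where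
  "borel_of X = sigma (topspace X) {U. openin X U}"

definition down_set_in :: "'a topology \<Rightarrow> ('a \<Rightarrow> 'a \<Rightarrow> bool) \<Rightarrow> 'a set \<Rightarrow> bool" where
  "down_set_in X le U \<longleftrightarrow> U \<subseteq> topspace X \<and>
     (\<forall>z\<in>U. \<forall>w\<in>topspace X. le w z \<longrightarrow> w \<in> U)"

definition up_set_in :: "'a topology \<Rightarrow> ('a \<Rightarrow> 'a \<Rightarrow> bool) \<Rightarrow> 'a set \<Rightarrow> bool" where
  "up_set_in X le U \<longleftrightarrow> U \<subseteq> topspace X \<and>
     (\<forall>z\<in>U. \<forall>w\<in>topspace X. le z w \<longrightarrow> w \<in> U)"

definition priestley_space :: "'a topology \<Rightarrow> ('a \<Rightarrow> 'a \<Rightarrow> bool) \<Rightarrow> bool" where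
  "priestley_space X le \<longleftrightarrow>
     (\<forall>x\<in>topspace X. le x x) \<and>
     (\<forall>x\<in>topspace X. \<forall>y\<in>topspace X. le x y \<and> le y x \<longrightarrow> x = y) \<and>
     (\<forall>x\<in>topspace X. \<forall>y\<in>topspace X. \<forall>z\<in>topspace X. le x y \<and> le y z \<longrightarrow> le x z) \<and>
     compact_space X \<and>
     (\<forall>x\<in>topspace X. \<forall>y\<in>topspace X. \<not> le y x \<longrightarrow>
        (\<exists>U. openin X U \<and> closedin X U \<and> down_set_in X le U \<and> x \<in> U \<and> y \<notin> U))"

definition upper_topology :: "'a topology \<Rightarrow> ('a \<Rightarrow> 'a \<Rightarrow> bool) \<Rightarrow> 'a topology" where
  "upper_topology X le = topology (\<lambda>U. openin X U \<and> up_set_in X le U)"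

definition noetherian_topology :: "'a topology \<Rightarrow> bool" where
  "noetherian_topology T \<longleftrightarrow>
     (\<forall>U :: nat \<Rightarrow> 'a set. (\<forall>n. openin T (U n)) \<and> incseq U \<longrightarrow> (\<exists>N. \<forall>n\<ge>N. U n = U N))"

definition noetherian_priestley_space :: "'a topology \<Rightarrow> ('a \<Rightarrow> 'a \<Rightarrow> bool) \<Rightarrow> bool" where
  "noetherian_priestley_space X le \<longleftrightarrow>
     priestley_space X le \<and> noetherian_topology (upper_topology X le)"

definition radon_measure :: "'a topology \<Rightarrow> 'a measure \<Rightarrow> bool" where
  "radon_measure X M \<longleftrightarrow>
     sets M = sets (borel_of X) \<and>
     (\<forall>B\<in>sets M. emeasure M B = (SUP K\<in>{K. compactin X K \<and> K \<subseteq> B}. emeasure M K))"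

end

theory Submission
  imports Defs
begin


lemma emeasure_countable_infsum:
  assumes A: "countable A" and S: "\<And>x. x\<in>A \<Longrightarrow> {x} \<in> sets M"
  shows "emeasure M A = (\<Sum>\<^sub>\<infinity>x\<in>A. emeasure M {x})"
proof -
  have AM: "A \<in> sets M" using sets.countable[OF S A] by auto
  have inf: "(\<Sum>\<^sub>\<infinity>x\<in>A. emeasure M {x}) = (SUP F\<in>{F. finite F \<and> F\<subseteq>A}. sum (\<lambda>x. emeasure M {x}) F)"
    by (rule nonneg_infsum_complete) simp
  have fin: "sum (\<lambda>x. emeasure M {x}) F = emeasure M F" if "finite F" "F \<subseteq> A" for F
    by (subst emeasure_eq_sum_singleton[of F M]) (use that S in auto)
  have le1: "(SUP F\<in>{F. finite F \<and> F\<subseteq>A}. sum (\<lambda>x. emeasure M {x}) F) \<le> emeasure M A"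
    by (rule SUP_least) (simp add: fin AM emeasure_mono)
  have le2: "emeasure M A \<le> (SUP F\<in>{F. finite F \<and> F\<subseteq>A}. sum (\<lambda>x. emeasure M {x}) F)"
  proof (cases "A = {}")
    case True then show ?thesis by simp
  next
    case False
    define An where "An n = from_nat_into A ` {..n}" for n
    have sub: "An n \<subseteq> A" for n unfolding An_def using from_nat_into[OF False] by auto
    have finA: "finite (An n)" for n unfolding An_def by auto
    have AnM: "An n \<in> sets M" for n
      by (rule sets.countable) (use sub S in blast, simp add: finA countable_finite)
    have rng: "range An \<subseteq> sets M" using AnM by auto
    have inc: "incseq An" unfolding An_def incseq_def by auto
    have U: "(\<Union>i. An i) = A"
    proof
      show "(\<Union>i. An i) \<subseteq> A" using sub by auto
      show "A \<subseteq> (\<Union>i. An i)"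
      proof
        fix x assume "x \<in> A"
        then obtain n where "x = from_nat_into A n"
          using range_from_nat_into[OF False A] by (metis rangeE)
        then show "x \<in> (\<Union>i. An i)" unfolding An_def by auto
      qed
    qed
    have "emeasure M A = (SUP n. emeasure M (An n))"
      using SUP_emeasure_incseq[OF rng inc] U by simp
    also have "\<dots> \<le> (SUP F\<in>{F. finite F \<and> F\<subseteq>A}. sum (\<lambda>x. emeasure M {x}) F)"
    proof (rule SUP_least)
      fix n
      have "emeasure M (An n) = sum (\<lambda>x. emeasure M {x}) (An n)" using fin[OF finA sub] by simp
      also have "\<dots> \<le> (SUP F\<in>{F. finite F \<and> F\<subseteq>A}. sum (\<lambda>x. emeasure M {x}) F)"
        by (rule SUP_upper) (use finA sub in auto)
      finally show "emeasure M (An n) \<le> \<dots>" .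
    qed
    finally show ?thesis .
  qed
  show ?thesis using le1 le2 inf by simp
qed



lemma openin_upper:
  "openin (upper_topology X le) U \<longleftrightarrow> openin X U \<and> up_set_in X le U"
proof -
  have "istopology (\<lambda>U. openin X U \<and> up_set_in X le U)"
  proof -
    have I: "openin X (S \<inter> T) \<and> up_set_in X le (S \<inter> T)"
      if "openin X S \<and> up_set_in X le S" "openin X T \<and> up_set_in X le T" for S T
      using that unfolding up_set_in_def by (auto simp: openin_Int)
    have U: "openin X (\<Union>K) \<and> up_set_in X le (\<Union>K)"
      if K: "\<forall>S\<in>K. openin X S \<and> up_set_in X le S" for K
    proof -
    have "openin X (\<Union>K)" using K by (intro openin_Union) blast
    moreover have "up_set_in X le (\<Union>K)"
      unfolding up_set_in_def
    proof (intro conjI ballI impI)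
      show "\<Union>K \<subseteq> topspace X" using K unfolding up_set_in_def by blast
    next
      fix z w assume "z \<in> \<Union>K" "w \<in> topspace X" "le z w"
      then obtain S where "S \<in> K" "z \<in> S" by blast
      with K \<open>w \<in> topspace X\<close> \<open>le z w\<close> have "w \<in> S" unfolding up_set_in_def by blast
      with \<open>S \<in> K\<close> show "w \<in> \<Union>K" by blast
    qed
    ultimately show ?thesis by blast
    qed
    show ?thesis unfolding istopology_def using I U by blast
  qed
  then show ?thesis unfolding upper_topology_def by simp
qed

lemma noeth_max:
  assumes N: "noetherian_topology T" and Q0: "Q U0" and O: "\<And>U. Q U \<Longrightarrow> openin T U"
  shows "\<exists>U. Q U \<and> (\<forall>V. Q V \<and> U \<subseteq> V \<longrightarrow> V = U)"
proof (rule ccontr)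
  assume "\<not> ?thesis"
  then have ex: "\<And>U. Q U \<Longrightarrow> \<exists>V. Q V \<and> U \<subset> V" by blast
  define g where "g U = (SOME V. Q V \<and> U \<subset> V)" for U
  have g: "Q (g U) \<and> U \<subset> g U" if "Q U" for U
    unfolding g_def using someI_ex[OF ex[OF that]] .
  define s where "s n = (g ^^ n) U0" for n
  have Qs: "Q (s n)" for n
  proof (induction n)
    case 0 then show ?case using Q0 by (simp add: s_def)
  next
    case (Suc n) then show ?case using g[OF Suc] by (simp add: s_def)
  qed
  have ss: "s n \<subset> s (Suc n)" for n
    using g[OF Qs[of n]] by (simp add: s_def)
  have "incseq s" using ss by (intro incseq_SucI) auto
  moreover have "\<forall>n. openin T (s n)" using Qs O by blast
  ultimately obtain N0 where "\<forall>n\<ge>N0. s n = s N0"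
    using N unfolding noetherian_topology_def by blast
  then have "s (Suc N0) = s N0" by (metis le_Suc_eq order_refl)
  with ss[of N0] show False by simp
qed



lemma priestley_hausdorff:
  assumes P: "priestley_space X le" shows "Hausdorff_space X"
  unfolding Hausdorff_space_def
proof (intro allI impI)
  fix x y assume xy: "x \<in> topspace X \<and> y \<in> topspace X \<and> x \<noteq> y"
  then have "\<not> le y x \<or> \<not> le x y" using P unfolding priestley_space_def by blast
  then show "\<exists>U V. openin X U \<and> openin X V \<and> x \<in> U \<and> y \<in> V \<and> disjnt U V"
  proof
    assume "\<not> le y x"
    then obtain U where U: "openin X U" "closedin X U" "x \<in> U" "y \<notin> U"
      using P xy unfolding priestley_space_def by blast
    have "openin X (topspace X - U)" using U(2) by (simp add: closedin_def)
    then show ?thesis using U xy by (intro exI[of _ U] exI[of _ "topspace X - U"]) (auto simp: disjnt_def)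
  next
    assume "\<not> le x y"
    then obtain U where U: "openin X U" "closedin X U" "y \<in> U" "x \<notin> U"
      using P xy unfolding priestley_space_def by blast
    have "openin X (topspace X - U)" using U(2) by (simp add: closedin_def)
    then show ?thesis using U xy by (intro exI[of _ "topspace X - U"] exI[of _ U]) (auto simp: disjnt_def)
  qed
qed

lemma priestley_closed_up:
  assumes P: "priestley_space X le" and m: "m \<in> topspace X"
  shows "closedin X {y\<in>topspace X. le m y}"
proof -
  let ?W = "\<Union>{U. openin X U \<and> closedin X U \<and> down_set_in X le U \<and> m \<notin> U}"
  have eq: "topspace X - {y\<in>topspace X. le m y} = ?W"
  proof
    show "topspace X - {y\<in>topspace X. le m y} \<subseteq> ?W"
    proof
      fix y assume "y \<in> topspace X - {y\<in>topspace X. le m y}"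
      then have "y \<in> topspace X" "\<not> le m y" by auto
      then obtain U where "openin X U \<and> closedin X U \<and> down_set_in X le U \<and> y \<in> U \<and> m \<notin> U"
        using P m unfolding priestley_space_def by blast
      then show "y \<in> ?W" by blast
    qed
    show "?W \<subseteq> topspace X - {y\<in>topspace X. le m y}"
    proof
      fix y assume "y \<in> ?W"
      then obtain U where U: "openin X U" "down_set_in X le U" "m \<notin> U" "y \<in> U" by blast
      then have "y \<in> topspace X" unfolding down_set_in_def by blast
      moreover have "\<not> le m y" using U m unfolding down_set_in_def by blast
      ultimately show "y \<in> topspace X - {y\<in>topspace X. le m y}" by blast
    qed
  qed
  have "openin X ?W" by (intro openin_Union) blast
  then show ?thesis unfolding closedin_def using eq by auto
qed

lemma priestley_sep:
  assumes P: "priestley_space X le" and D: "closedin X D" and mD: "m \<in> D"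
    and mx: "\<forall>d\<in>D. le m d \<longrightarrow> d = m" and K: "compactin X K" and mK: "m \<notin> K"
  shows "\<exists>V. openin X V \<and> closedin X V \<and> up_set_in X le V \<and> m \<in> V \<and> V \<inter> D \<inter> K = {}"
proof -
  let ?U = "{U. openin X U \<and> closedin X U \<and> down_set_in X le U \<and> m \<notin> U}"
  have DK: "compactin X (D \<inter> K)" by (rule closed_Int_compactin[OF D K])
  have mt: "m \<in> topspace X" using D mD closedin_subset by blast
  have cov: "D \<inter> K \<subseteq> \<Union>?U"
  proof
    fix k assume k: "k \<in> D \<inter> K"
    then have kt: "k \<in> topspace X" using D closedin_subset by blast
    have "\<not> le m k" using mx k mK by blast
    then obtain U where "openin X U \<and> closedin X U \<and> down_set_in X le U \<and> k \<in> U \<and> m \<notin> U"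
      using P mt kt unfolding priestley_space_def by blast
    then show "k \<in> \<Union>?U" by blast
  qed
  obtain F where F: "finite F" "F \<subseteq> ?U" "D \<inter> K \<subseteq> \<Union>F"
  proof -
    have "\<forall>\<V>. (\<forall>B\<in>\<V>. openin X B) \<and> D \<inter> K \<subseteq> \<Union>\<V> \<longrightarrow> (\<exists>F. finite F \<and> F \<subseteq> \<V> \<and> D \<inter> K \<subseteq> \<Union>F)"
      using DK unfolding compactin_def by blast
    then have hU: "(\<forall>B\<in>?U. openin X B) \<and> D \<inter> K \<subseteq> \<Union>?U \<longrightarrow> (\<exists>F. finite F \<and> F \<subseteq> ?U \<and> D \<inter> K \<subseteq> \<Union>F)"
      by (rule spec)
    have o: "\<forall>B\<in>?U. openin X B" by blast
    have ex: "\<exists>F. finite F \<and> F \<subseteq> ?U \<and> D \<inter> K \<subseteq> \<Union>F" by (rule mp[OF hU conjI[OF o cov]])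
    show ?thesis using ex by (elim exE conjE) (rule that)
  qed
  define V where "V = topspace X - \<Union>F"
  have c: "closedin X (\<Union>F)" using F by (intro closedin_Union) auto
  have o: "openin X (\<Union>F)" using F by (intro openin_Union) auto
  have "openin X V" unfolding V_def using c by (simp add: closedin_def)
  moreover have "closedin X V" unfolding V_def using o by (simp add: closedin_diff)
  moreover have "up_set_in X le V"
    unfolding up_set_in_def V_def
  proof (intro conjI ballI impI)
    show "topspace X - \<Union>F \<subseteq> topspace X" by blast
  next
    fix z w assume z: "z \<in> topspace X - \<Union>F" and w: "w \<in> topspace X" and zw: "le z w"
    show "w \<in> topspace X - \<Union>F"
    proof (rule ccontr)
      assume "w \<notin> topspace X - \<Union>F"
      then obtain U where "U \<in> F" "w \<in> U" using w by blast
      then have "z \<in> U" using F(2) z zw unfolding down_set_in_def by blast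
      with \<open>U \<in> F\<close> z show False by blast
    qed
  qed
  moreover have "m \<in> V" unfolding V_def using mt F(2) by blast
  moreover have "V \<inter> D \<inter> K = {}" unfolding V_def using F(3) by blast
  ultimately show ?thesis by blast
qed



lemma priestley_max:
  assumes P: "priestley_space X le" and D: "closedin X D" and ne: "D \<noteq> {}"
  shows "\<exists>m\<in>D. \<forall>d\<in>D. le m d \<longrightarrow> d = m"
proof -
  have Dt: "D \<subseteq> topspace X" using D closedin_subset by blast
  have refl: "\<And>x. x \<in> topspace X \<Longrightarrow> le x x" using P unfolding priestley_space_def by blast
  have antis: "\<And>x y. x \<in> topspace X \<Longrightarrow> y \<in> topspace X \<Longrightarrow> le x y \<Longrightarrow> le y x \<Longrightarrow> x = y"
    using P unfolding priestley_space_def by blast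
  have trans: "\<And>x y z. x \<in> topspace X \<Longrightarrow> y \<in> topspace X \<Longrightarrow> z \<in> topspace X \<Longrightarrow> le x y \<Longrightarrow> le y z \<Longrightarrow> le x z"
    using P unfolding priestley_space_def by blast
  have cs: "compact_space X" using P unfolding priestley_space_def by blast
  define S where "S m = {d\<in>D. le m d}" for m
  have St: "S m \<subseteq> topspace X" for m using Dt unfolding S_def by blast
  have SS: "topspace X - (topspace X - S m) = S m" for m using St[of m] by blast
  have Sc: "closedin X (S m)" if "m \<in> D" for m
  proof -
    have "S m = D \<inter> {y\<in>topspace X. le m y}" unfolding S_def using Dt by blast
    then show ?thesis using closedin_Int[OF D priestley_closed_up[OF P]] that Dt by auto
  qed
  have mS: "m \<in> S m" if "m \<in> D" for m using that refl Dt unfolding S_def by blast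
  have Str: "S m' \<subseteq> S m" if "m \<in> D" "m' \<in> S m" for m m'
    using that trans Dt unfolding S_def by blast
  define A where "A = {topspace X - S m | m. m \<in> D}"
  have "\<exists>M\<in>A. \<forall>Y\<in>A. M \<subseteq> Y \<longrightarrow> Y = M"
  proof (rule Zorn_Lemma2, intro ballI)
    fix C assume C: "C \<in> chains A"
    have CA: "C \<subseteq> A" using C by (rule chainsD2)
    show "\<exists>U\<in>A. \<forall>Y\<in>C. Y \<subseteq> U"
    proof (cases "C = {}")
      case True
      obtain m where "m \<in> D" using ne by blast
      then have "topspace X - S m \<in> A" unfolding A_def by blast
      then show ?thesis using True by blast
    next
      case False
      define C' where "C' = (\<lambda>c. topspace X - c) ` C"
      have cl: "\<forall>c\<in>C'. closedin X c"
      proof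
        fix c assume "c \<in> C'"
        then obtain m where "m \<in> D" "c = topspace X - (topspace X - S m)"
          unfolding C'_def using CA unfolding A_def by blast
        then show "closedin X c" using SS Sc by simp
      qed
      have fip: "\<forall>G. finite G \<and> G \<subseteq> C' \<longrightarrow> \<Inter>G \<noteq> {}"
      proof (intro allI impI)
        fix G assume G: "finite G \<and> G \<subseteq> C'"
        show "\<Inter>G \<noteq> {}"
        proof (cases "G = {}")
          case True then show ?thesis by simp
        next
          case Gne: False
          obtain F where F: "F \<subseteq> C" "finite F" "G = (\<lambda>c. topspace X - c) ` F"
            using G unfolding C'_def by (meson finite_subset_image)
          have Fne: "F \<noteq> {}" using F Gne by blast
          have ch: "subset.chain A F"
            unfolding subset_chain_def using F(1) CA chainsD[OF C] by blast
          have "\<Union>F \<in> F" by (rule Union_in_chain[OF F(2) Fne ch])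
          then obtain m where m: "m \<in> D" "\<Union>F = topspace X - S m"
            using F(1) CA unfolding A_def by blast
          have "m \<in> \<Inter>G"
          proof
            fix g assume "g \<in> G"
            then obtain c where c: "c \<in> F" "g = topspace X - c" using F(3) by blast
            have "c \<subseteq> \<Union>F" using c by blast
            then show "m \<in> g" using c m mS[OF m(1)] Dt by blast
          qed
          then show ?thesis by blast
        qed
      qed
      have "\<Inter>C' \<noteq> {}" using cs cl fip unfolding compact_space_fip by blast
      then obtain m' where m': "m' \<in> \<Inter>C'" by blast
      obtain c0 where c0: "c0 \<in> C" using False by blast
      then obtain m0 where m0: "m0 \<in> D" "c0 = topspace X - S m0" using CA unfolding A_def by blast
      have "m' \<in> topspace X - c0" using m' c0 unfolding C'_def by blast
      then have "m' \<in> S m0" using m0 SS by simp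
      then have m'D: "m' \<in> D" unfolding S_def by blast
      have "\<forall>Y\<in>C. Y \<subseteq> topspace X - S m'"
      proof
        fix Y assume Y: "Y \<in> C"
        then obtain m where m: "m \<in> D" "Y = topspace X - S m" using CA unfolding A_def by blast
        have "m' \<in> topspace X - Y" using m' Y unfolding C'_def by blast
        then have "m' \<in> S m" using m SS by simp
        then have "S m' \<subseteq> S m" using Str m by blast
        then show "Y \<subseteq> topspace X - S m'" using m by blast
      qed
      moreover have "topspace X - S m' \<in> A" using m'D unfolding A_def by blast
      ultimately show ?thesis by blast
    qed
  qed
  then obtain M where M: "M \<in> A" and max: "\<forall>Y\<in>A. M \<subseteq> Y \<longrightarrow> Y = M" by blast
  then obtain m where m: "m \<in> D" "M = topspace X - S m" unfolding A_def by blast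
  have "\<forall>d\<in>D. le m d \<longrightarrow> d = m"
  proof (intro ballI impI)
    fix d assume d: "d \<in> D" "le m d"
    then have "d \<in> S m" unfolding S_def by blast
    then have "S d \<subseteq> S m" using Str m by blast
    then have "M \<subseteq> topspace X - S d" using m by blast
    moreover have "topspace X - S d \<in> A" using d unfolding A_def by blast
    ultimately have "topspace X - S d = topspace X - S m" using max m by blast
    then have "S d = S m" using SS by metis
    then have "m \<in> S d" using mS m by simp
    then have "le d m" unfolding S_def by blast
    then show "d = m" using antis d m Dt by blast
  qed
  then show ?thesis using m by blast
qed



theorem theorem3p8:
  fixes X :: "'a topology" and le :: "'a \<Rightarrow> 'a \<Rightarrow> bool" and M :: "'a measure"
  assumes "noetherian_priestley_space X le"
    and "radon_measure X M"
    and "emeasure M (space M) < \<infinity>"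
  shows "\<exists>F. countable F \<and> F \<subseteq> topspace X \<and>
           (\<Sum>\<^sub>\<infinity>x\<in>F. emeasure M {x}) < \<infinity> \<and>
           (\<forall>B\<in>sets M. emeasure M B = (\<Sum>\<^sub>\<infinity>x\<in>F. emeasure M {x} * indicator B x))"
proof -
  have P: "priestley_space X le" and N: "noetherian_topology (upper_topology X le)"
    using assms(1) unfolding noetherian_priestley_space_def by auto
  have setsM: "sets M = sigma_sets (topspace X) {U. openin X U}"
    using assms(2) unfolding radon_measure_def borel_of_def
    by (subst (asm) sets_measure_of) (auto dest: openin_subset)
  have spM: "space M = topspace X"
    using assms(2) unfolding radon_measure_def borel_of_def
    by (metis sets_eq_imp_space_eq space_measure_of_conv)
  have inner: "\<And>B. B \<in> sets M \<Longrightarrow> emeasure M B = (SUP K\<in>{K. compactin X K \<and> K \<subseteq> B}. emeasure M K)"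
    using assms(2) unfolding radon_measure_def by blast
  have openM: "U \<in> sets M" if "openin X U" for U
    using that unfolding setsM by (auto intro: sigma_sets.Basic)
  have closedM: "C \<in> sets M" if "closedin X C" for C
  proof -
    have "topspace X - C \<in> sets M" using that openM by (simp add: closedin_def)
    then have "space M - (topspace X - C) \<in> sets M" by blast
    moreover have "space M - (topspace X - C) = C" using spM closedin_subset[OF that] by blast
    ultimately show ?thesis by simp
  qed
  interpret finite_measure M using assms(3) by (intro finite_measureI) simp
  have H: "Hausdorff_space X" by (rule priestley_hausdorff[OF P])
  have singM: "{x} \<in> sets M" if "x \<in> topspace X" for x
    using closedM closedin_Hausdorff_singleton[OF H that] by blast
  define F where "F = {x. emeasure M {x} \<noteq> 0}"
  have "F = {x. measure M {x} \<noteq> 0}"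
    unfolding F_def using emeasure_eq_measure by auto
  then have cF: "countable F" using countable_support by simp
  have Ft: "F \<subseteq> topspace X"
  proof
    fix x assume "x \<in> F"
    then have "{x} \<in> sets M" unfolding F_def using emeasure_notin_sets by blast
    then show "x \<in> topspace X" using sets.sets_into_space spM by blast
  qed
  have FM: "F \<in> sets M" using sets.countable[OF singM cF] Ft by blast
  have key: "emeasure M (topspace X - F) = 0"
  proof (rule ccontr)
    assume nz: "emeasure M (topspace X - F) \<noteq> 0"
    define Q where "Q U \<longleftrightarrow> openin X U \<and> up_set_in X le U \<and> emeasure M ((topspace X - U) - F) \<noteq> 0" for U
    have Q0: "Q {}" unfolding Q_def up_set_in_def using nz by simp
    have QO: "openin (upper_topology X le) U" if "Q U" for U
      using that by (simp add: Q_def openin_upper)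
    obtain U where QU: "Q U" and Umax: "\<forall>V. Q V \<and> U \<subseteq> V \<longrightarrow> V = U"
      using noeth_max[of "upper_topology X le" Q "{}", OF N Q0 QO] by blast
    define D where "D = topspace X - U"
    have Uo: "openin X U" "up_set_in X le U" and aD: "emeasure M (D - F) \<noteq> 0"
      using QU by (auto simp: Q_def D_def)
    have Dc: "closedin X D" unfolding D_def by (intro closedin_diff closedin_topspace Uo(1))
    have Dne: "D \<noteq> {}" using aD by auto
    obtain m where mD: "m \<in> D" and mmax: "\<forall>d\<in>D. le m d \<longrightarrow> d = m"
      using priestley_max[OF P Dc Dne] by blast
    have mt: "m \<in> topspace X" using mD D_def by blast
    define a where "a = measure M (D - F)"
    have "a \<noteq> 0" using aD unfolding a_def by (simp add: emeasure_eq_measure)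
    then have apos: "a > 0" unfolding a_def using measure_nonneg[of M "D - F"] by linarith
    have claim1: "a \<le> measure M ((D \<inter> V) - F)"
      if V: "openin X V" "closedin X V" "up_set_in X le V" "m \<in> V" for V
    proof -
      have "Q (U \<union> V) \<longrightarrow> U \<union> V = U" using Umax by blast
      moreover have "U \<union> V \<noteq> U" using V(4) mD D_def by blast
      moreover have "openin X (U \<union> V)" using Uo V by blast
      moreover have "up_set_in X le (U \<union> V)" using Uo(2) V(3) unfolding up_set_in_def by blast
      ultimately have "emeasure M ((topspace X - (U \<union> V)) - F) = 0" unfolding Q_def by blast
      then have z: "measure M ((topspace X - (U \<union> V)) - F) = 0" by (simp add: measure_def)
      have sub: "D - F \<subseteq> ((topspace X - (U \<union> V)) - F) \<union> ((D \<inter> V) - F)" unfolding D_def by blast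
      have "closedin X (topspace X - (U \<union> V))"
        by (intro closedin_diff closedin_topspace) (use Uo V in blast)
      then have m1: "(topspace X - (U \<union> V)) - F \<in> sets M" using closedM FM by blast
      have m2: "(D \<inter> V) - F \<in> sets M" using closedM[OF Dc] openM[OF V(1)] FM by blast
      have "a \<le> measure M (((topspace X - (U \<union> V)) - F) \<union> ((D \<inter> V) - F))"
        unfolding a_def by (rule finite_measure_mono[OF sub]) (use m1 m2 in blast)
      also have "\<dots> \<le> measure M ((topspace X - (U \<union> V)) - F) + measure M ((D \<inter> V) - F)"
        by (rule measure_Un_le[OF m1 m2])
      finally show ?thesis using z by simp
    qed
    define c where "c = measure M (topspace X - {m})"
    have Bm: "topspace X - {m} \<in> sets M"
      using openM[OF openin_diff[OF openin_topspace closedin_Hausdorff_singleton[OF H mt]]] .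
    have claim2: "measure M K \<le> c - a" if K: "compactin X K" "K \<subseteq> topspace X - {m}" for K
    proof -
      have mK: "m \<notin> K" using K by blast
      obtain V where V: "openin X V" "closedin X V" "up_set_in X le V" "m \<in> V" "V \<inter> D \<inter> K = {}"
        using priestley_sep[OF P Dc mD mmax K(1) mK] by blast
      have KM: "K \<in> sets M" using closedM compactin_imp_closedin[OF H K(1)] by blast
      have sub: "(D \<inter> V) - F \<subseteq> ((topspace X - {m}) - K) \<union> ({m} - F)" using V(5) D_def by blast
      have mF: "measure M ({m} - F) = 0"
      proof (cases "m \<in> F")
        case True then show ?thesis by simp
      next
        case False
        then have "emeasure M {m} = 0" unfolding F_def by simp
        moreover have "{m} - F = {m}" using False by blast
        ultimately show ?thesis by (simp add: measure_def)
      qed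
      have m3: "(topspace X - {m}) - K \<in> sets M" using Bm KM by blast
      have m4: "{m} - F \<in> sets M" using singM[OF mt] FM by blast
      have "a \<le> measure M ((D \<inter> V) - F)" by (rule claim1[OF V(1-4)])
      also have "\<dots> \<le> measure M (((topspace X - {m}) - K) \<union> ({m} - F))"
        by (rule finite_measure_mono[OF sub]) (use m3 m4 in blast)
      also have "\<dots> \<le> measure M ((topspace X - {m}) - K) + measure M ({m} - F)"
        by (rule measure_Un_le[OF m3 m4])
      also have "measure M ((topspace X - {m}) - K) = c - measure M K"
        unfolding c_def by (rule finite_measure_Diff[OF Bm KM K(2)])
      finally show ?thesis using mF by simp
    qed
    have ca: "0 \<le> c - a" using claim2[of "{}"] by simp
    have "emeasure M (topspace X - {m}) = (SUP K\<in>{K. compactin X K \<and> K \<subseteq> topspace X - {m}}. emeasure M K)"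
      by (rule inner[OF Bm])
    also have "\<dots> \<le> ennreal (c - a)"
    proof (rule SUP_least)
      fix K assume "K \<in> {K. compactin X K \<and> K \<subseteq> topspace X - {m}}"
      then have "measure M K \<le> c - a" using claim2 by blast
      then show "emeasure M K \<le> ennreal (c - a)" by (simp add: emeasure_eq_measure ennreal_leI)
    qed
    finally have "ennreal c \<le> ennreal (c - a)" unfolding c_def by (simp add: emeasure_eq_measure)
    then have "c \<le> c - a" using ca by (simp add: ennreal_le_iff)
    then show False using apos by simp
  qed
  have main: "emeasure M B = (\<Sum>\<^sub>\<infinity>x\<in>F. emeasure M {x} * indicator B x)" if B: "B \<in> sets M" for B
  proof -
    have "B - F \<subseteq> topspace X - F" using B spM sets.sets_into_space by blast
    then have "emeasure M (B - F) \<le> emeasure M (topspace X - F)"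
      by (intro emeasure_mono) (use FM spM sets.Diff[OF sets.top FM] in auto)
    then have z: "emeasure M (B - F) = 0" using key by simp
    have "emeasure M B = emeasure M (B \<inter> F) + emeasure M (B - F)"
    proof -
      have "B \<inter> F \<union> (B - F) = B" by blast
      moreover have "B \<inter> F \<inter> (B - F) = {}" by blast
      ultimately show ?thesis using plus_emeasure[of "B \<inter> F" M "B - F"] B FM by auto
    qed
    also have "\<dots> = emeasure M (B \<inter> F)" using z by simp
    also have "\<dots> = (\<Sum>\<^sub>\<infinity>x\<in>B \<inter> F. emeasure M {x})"
      by (rule emeasure_countable_infsum) (use cF Ft singM in \<open>auto intro: countable_subset\<close>)
    also have "\<dots> = (\<Sum>\<^sub>\<infinity>x\<in>F. emeasure M {x} * indicator B x)"
      by (rule infsum_cong_neutral) (auto simp: indicator_def)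
    finally show ?thesis .
  qed
  have "(\<Sum>\<^sub>\<infinity>x\<in>F. emeasure M {x}) = (\<Sum>\<^sub>\<infinity>x\<in>F. emeasure M {x} * indicator (space M) x)"
    by (rule infsum_cong) (use Ft spM in \<open>auto simp: indicator_def\<close>)
  also have "\<dots> = emeasure M (space M)" using main[of "space M"] by simp
  finally have "(\<Sum>\<^sub>\<infinity>x\<in>F. emeasure M {x}) < \<infinity>" using assms(3) by simp
  then show ?thesis using cF Ft main by blast
qed

end
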